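(* Let $K:\mathbb{R}\to\mathbb{R}$ be defined by $K(t)=\sin(\exp(\exp(1/|t|)))$ for $0<|t|\le1$, $K(t)=0$ for $|t|>1$ (and any fixed value at $t=0$). Let $A=[0,1]$ and $\mathcal F(A)=\{K(x-\cdot):x\in A\}$. Then $\mathcal F(A)$ is not a VC class: there do not exist constants $C>0$, $b>0$ such that $\sup_{\mathcal P}N_{cov}(\epsilon,\mathcal F(A),d_{L^2(\mathcal P)})\le C\epsilon^{-b}$ for all $0<\epsilon<1$.
   Context: For a Borel probability measure $\mathcal P$ on $\mathbb{R}$, $d_{L^2(\mathcal P)}(K(x-\cdot),K(y-\cdot))=\big(\int(K(x-z)-K(y-z))^2d\mathcal P(z)\big)^{1/2}$. $N_{cov}(\epsilon,\mathcal F(A),d_{L^2(\mathcal P)})$ is the minimal number of $d_{L^2(\mathcal P)}$-balls of radius $\epsilon$ needed to cover $\mathcal F(A)$; the supremum is over all Borel probability measures on $\mathbb{R}$. *)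

theory Defs
  imports "HOL-Probability.Probability"
begin

definition Kker :: "real \<Rightarrow> real \<Rightarrow> real" where
  "Kker c t = (if t = 0 then c
               else if \<bar>t\<bar> \<le> 1 then sin (exp (exp (1 / \<bar>t\<bar>))) else 0)"

text \<open>Closed L2(P)-ball membership: d_{L2(P)}(f,g) \<le> eps, i.e. the integral of (f-g)^2 is at most eps^2.
  The nonnegative integral is used, so non-square-integrable differences have infinite distance.\<close>
definition L2_close :: "real measure \<Rightarrow> real \<Rightarrow> (real \<Rightarrow> real) \<Rightarrow> (real \<Rightarrow> real) \<Rightarrow> bool" where
  "L2_close P eps f g \<longleftrightarrow> (\<integral>\<^sup>+ z. ennreal ((f z - g z)^2) \<partial>P) \<le> ennreal (eps^2)"

text \<open>Covering number: minimal number of L2(P)-balls of radius eps (with Borel measurable centers)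
  covering F; equals \<infinity> if no finite cover exists.\<close>
definition N_cov :: "real \<Rightarrow> (real \<Rightarrow> real) set \<Rightarrow> real measure \<Rightarrow> ereal" where
  "N_cov eps F P = Inf {ereal (real (card G)) | G. finite G \<and> G \<subseteq> borel_measurable borel \<and>
                          (\<forall>f\<in>F. \<exists>g\<in>G. L2_close P eps f g)}"

definition borel_prob_measures :: "real measure set" where
  "borel_prob_measures = {P. prob_space P \<and> sets P = sets borel}"

end

theory Submission
  imports Defs
begin

definition hh :: "real \<Rightarrow> real" where "hh t = exp (exp (1/t))"
definition BB :: "real \<Rightarrow> real" where "BB p = exp (exp (1/p) + 3/p)"

lemma hh_deriv: "t \<noteq> 0 \<Longrightarrow> (hh has_real_derivative (- (hh t * exp (1/t) / t^2))) (at t)"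
  unfolding hh_def
  by (auto intro!: derivative_eq_intros simp: power2_eq_square field_simps)

lemma hh_mono: "0 < p \<Longrightarrow> p \<le> q \<Longrightarrow> hh q \<le> hh p"
  unfolding hh_def by (simp add: frac_le)

lemma BB_mono: "0 < p \<Longrightarrow> p \<le> q \<Longrightarrow> BB q \<le> BB p"
  unfolding BB_def by (auto intro!: add_mono simp: frac_le)

lemma mvt_bounds:
  assumes "0 < p" "p < q" "q \<le> 1"
  shows "(q-p)*hh q \<le> hh p - hh q \<and> hh p - hh q \<le> (q-p)*BB p"
proof -
  obtain \<xi> where xi: "p < \<xi>" "\<xi> < q" and eq: "hh q - hh p = (q - p) * (- (hh \<xi> * exp (1/\<xi>) / \<xi>^2))"
    using MVT2[of p q hh "\<lambda>t. - (hh t * exp (1/t) / t^2)"] assms hh_deriv by force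
  have g: "hh p - hh q = (q-p) * (hh \<xi> * exp (1/\<xi>) / \<xi>^2)" using eq by simp
  have x0: "0 < \<xi>" "\<xi> \<le> 1" using xi assms by auto
  have f1: "1 \<le> exp (1/\<xi>) / \<xi>^2"
  proof -
    have "1 \<le> exp (1/\<xi>)" using x0 by simp
    moreover have "\<xi>^2 \<le> 1" using x0 by (intro power_le_one) auto
    ultimately have "\<xi>^2 \<le> exp (1/\<xi>)" by linarith
    thus ?thesis using x0 by (simp add: le_divide_eq)
  qed
  have "hh q \<le> hh \<xi>" using hh_mono x0 xi by simp
  hence lo: "hh q \<le> hh \<xi> * exp (1/\<xi>) / \<xi>^2" using f1 
    by (smt (verit, best) exp_gt_zero hh_def mult_le_cancel_left1 times_divide_eq_right)
  have "hh \<xi> * exp (1/\<xi>) / \<xi>^2 \<le> BB \<xi>"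
  proof -
    have a: "1/\<xi>^2 \<le> exp (2/\<xi>)"
    proof -
      have "1/\<xi> \<le> exp (1/\<xi>)" using exp_ge_add_one_self[of "1/\<xi>"] by linarith
      hence "(1/\<xi>)^2 \<le> (exp (1/\<xi>))^2" using x0 by (intro power_mono) auto
      thus ?thesis by (simp add: power_divide exp_double[symmetric] flip: exp_of_nat_mult)
    qed
    have "hh \<xi> * exp (1/\<xi>) / \<xi>^2 = hh \<xi> * exp (1/\<xi>) * (1/\<xi>^2)" by simp
    also have "\<dots> \<le> hh \<xi> * exp (1/\<xi>) * exp (2/\<xi>)"
      using a by (intro mult_left_mono) (auto simp: hh_def)
    also have "\<dots> = BB \<xi>" by (simp add: hh_def BB_def flip: exp_add)
    finally show ?thesis .
  qed
  also have "BB \<xi> \<le> BB p" using BB_mono xi assms by simp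
  finally have hi: "hh \<xi> * exp (1/\<xi>) / \<xi>^2 \<le> BB p" .
  have qp: "0 \<le> q - p" using assms by simp
  show ?thesis unfolding g using mult_left_mono[OF lo qp] mult_left_mono[OF hi qp] by simp
qed

lemma sin_half1: "pi/6 \<le> y \<Longrightarrow> y \<le> 5*pi/6 \<Longrightarrow> 1/2 \<le> sin y"
proof -
  assume a: "pi/6 \<le> y" "y \<le> 5*pi/6"
  show ?thesis
  proof (cases "y \<le> pi/2")
    case True thus ?thesis using sin_monotone_2pi_le[of "pi/6" y] a sin_30 by (simp add: field_simps)
  next
    case False
    have "sin (pi/6) \<le> sin (pi - y)" using False a by (intro sin_monotone_2pi_le) (auto simp: field_simps)
    thus ?thesis using sin_30 by simp
  qed
qed

lemma sin_half2: "7*pi/6 \<le> y \<Longrightarrow> y \<le> 11*pi/6 \<Longrightarrow> sin y \<le> -1/2"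
proof -
  assume a: "7*pi/6 \<le> y" "y \<le> 11*pi/6"
  have "1/2 \<le> sin (y - pi)" using a by (intro sin_half1) (auto simp: field_simps)
  moreover have "sin y = - sin (y - pi)" by (metis diff_add_cancel sin_periodic_pi minus_minus)
  ultimately show ?thesis by linarith
qed

lemma sin_shift: "sin ((y::real) + 2*pi * of_int n) = sin y"
proof -
  have "sin (y + 2*pi * of_int n) = sin y * cos (2*pi * of_int n) + cos y * sin (2*pi * of_int n)"
    by (rule sin_add)
  also have "\<dots> = sin y" using cos_int_2pin[of n] sin_int_2pin[of n] by simp
  finally show ?thesis .
qed

lemma hh_cont: "0 < (x::real) + d \<Longrightarrow> isCont (\<lambda>x. hh (x + d)) x"
  unfolding hh_def by (intro continuous_intros) auto

lemma split_step:
  fixes pos :: bool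
  assumes "0 < d" "0 \<le> a" "0 < l" "a + l \<le> L" "L + d \<le> 1" "4*pi \<le> l * hh (L + d)"
  shows "\<exists>a'. a \<le> a' \<and> a' + (2*pi/3)/BB d \<le> a + l \<and>
     (\<forall>x. a' \<le> x \<and> x \<le> a' + (2*pi/3)/BB d \<longrightarrow>
        (if pos then 1/2 \<le> sin (hh (x+d)) else sin (hh (x+d)) \<le> -1/2))"
proof -
  define \<phi> where "\<phi> x = hh (x + d)" for x
  have mono: "\<phi> y \<le> \<phi> x" if "a \<le> x" "x \<le> y" for x y
    unfolding \<phi>_def using that assms by (intro hh_mono) auto
  have cont: "\<forall>x. a \<le> x \<and> x \<le> a + l \<longrightarrow> isCont \<phi> x"
    unfolding \<phi>_def using assms by (auto intro!: hh_cont)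
  have "l * hh (a + l + d) \<le> hh (a + d) - hh (a + l + d)"
    using mvt_bounds[of "a+d" "a+l+d"] assms by auto
  moreover have "hh (L + d) \<le> hh (a + l + d)" using assms by (intro hh_mono) auto
  ultimately have var: "\<phi> (a + l) + 4*pi \<le> \<phi> a" unfolding \<phi>_def using assms
    by (smt (verit, best) mult_left_mono)
  define lo where "lo = \<phi> (a + l)"
  define k where "k = \<lceil>lo / (2*pi)\<rceil>"
  define \<theta> where "\<theta> = 2*pi * of_int k"
  have pp: "0 < 2*pi" using pi_gt_zero by simp
  have e: "lo = (lo/(2*pi)) * (2*pi)" using pp by simp
  have th1: "lo \<le> \<theta>"
  proof -
    have "lo/(2*pi) \<le> of_int k" unfolding k_def by (rule le_of_int_ceiling)
    hence "(lo/(2*pi)) * (2*pi) \<le> of_int k * (2*pi)" using pp by (intro mult_right_mono) auto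
    thus ?thesis unfolding \<theta>_def using e by (simp add: mult.commute)
  qed
  have th2: "\<theta> \<le> lo + 2*pi"
  proof -
    have "of_int k \<le> lo/(2*pi) + 1" unfolding k_def by (rule of_int_ceiling_le_add_one)
    hence "of_int k * (2*pi) \<le> (lo/(2*pi) + 1) * (2*pi)" using pp by (intro mult_right_mono) auto
    also have "\<dots> = lo + 2*pi" using pp by (simp add: distrib_right)
    finally show ?thesis unfolding \<theta>_def by (simp add: mult.commute)
  qed
  define \<alpha> where "\<alpha> = (if pos then pi/6 else 7*pi/6)"
  define \<beta> where "\<beta> = \<alpha> + 2*pi/3"
  have ab: "0 \<le> \<alpha>" "\<beta> \<le> 2*pi" unfolding \<beta>_def \<alpha>_def by auto
  have y1: "\<phi> (a+l) \<le> \<theta> + \<alpha>" "\<theta> + \<alpha> \<le> \<phi> a" using th1 th2 ab var unfolding lo_def \<beta>_def by linarith+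
  have y2: "\<phi> (a+l) \<le> \<theta> + \<beta>" "\<theta> + \<beta> \<le> \<phi> a" using th1 th2 ab var unfolding lo_def \<beta>_def by linarith+
  have al: "a \<le> a + l" using assms by simp
  have "\<exists>x. a \<le> x \<and> x \<le> a+l \<and> \<phi> x = \<theta>+\<alpha>" by (rule IVT2[OF y1 al cont])
  then obtain x2 where x2: "a \<le> x2" "x2 \<le> a + l" "\<phi> x2 = \<theta> + \<alpha>" by blast
  have "\<exists>x. a \<le> x \<and> x \<le> a+l \<and> \<phi> x = \<theta>+\<beta>" by (rule IVT2[OF y2 al cont])
  then obtain x1 where x1: "a \<le> x1" "x1 \<le> a + l" "\<phi> x1 = \<theta> + \<beta>" by blast
  have x12: "x1 < x2"
  proof (rule ccontr)
    assume "\<not> x1 < x2" hence "\<phi> x1 \<le> \<phi> x2" using mono[of x2 x1] x2 by auto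
    thus False using x1 x2 pi_gt_zero unfolding \<beta>_def by simp
  qed
  have "\<phi> x1 - \<phi> x2 \<le> (x2 - x1) * BB (x1 + d)"
    using mvt_bounds[of "x1+d" "x2+d"] assms x12 x1 x2 unfolding \<phi>_def by auto
  also have "\<dots> \<le> (x2 - x1) * BB d" using x12 x1 assms by (intro mult_left_mono BB_mono) auto
  finally have "2*pi/3 \<le> (x2 - x1) * BB d" using x1 x2 unfolding \<beta>_def by simp
  hence len: "(2*pi/3)/BB d \<le> x2 - x1" by (simp add: BB_def divide_le_eq)
  show ?thesis
  proof (intro exI[of _ x1] conjI allI impI)
    show "a \<le> x1" by fact
    show "x1 + 2 * pi / 3 / BB d \<le> a + l" using len x2 by simp
  next
    fix x assume x: "x1 \<le> x \<and> x \<le> x1 + 2 * pi / 3 / BB d"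
    have "\<phi> x \<le> \<theta> + \<beta>" using mono[of x1 x] x x1 by simp
    moreover have "\<theta> + \<alpha> \<le> \<phi> x" using mono[of x x2] x x1 x2 len by simp
    ultimately have r: "\<alpha> \<le> \<phi> x - \<theta>" "\<phi> x - \<theta> \<le> \<beta>" by auto
    have "sin (\<phi> x) = sin ((\<phi> x - \<theta>) + 2*pi * of_int k)" by (simp add: \<theta>_def)
    also have "\<dots> = sin (\<phi> x - \<theta>)" by (rule sin_shift)
    finally have e: "sin (hh (x+d)) = sin (\<phi> x - \<theta>)" by (simp add: \<phi>_def)
    show "if pos then 1/2 \<le> sin (hh (x+d)) else sin (hh (x+d)) \<le> -1/2"
    proof (cases pos)
      case True
      hence "pi/6 \<le> \<phi> x - \<theta>" "\<phi> x - \<theta> \<le> 5*pi/6" using r unfolding \<beta>_def \<alpha>_def by auto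
      thus ?thesis using True sin_half1[of "\<phi> x - \<theta>"] unfolding e by simp
    next
      case False
      hence "7*pi/6 \<le> \<phi> x - \<theta>" "\<phi> x - \<theta> \<le> 11*pi/6" using r unfolding \<beta>_def \<alpha>_def by auto
      thus ?thesis using False sin_half2[of "\<phi> x - \<theta>"] unfolding e by simp
    qed
  qed
qed

definition cnd :: "nat set \<Rightarrow> (nat \<Rightarrow> real) \<Rightarrow> nat \<Rightarrow> real \<Rightarrow> bool" where
  "cnd S d j x = (if j \<in> S then 1/2 \<le> sin (hh (x + d j)) else sin (hh (x + d j)) \<le> -1/2)"

lemma nest:
  assumes H: "\<forall>n<m. 0 < d n \<and> L + d n \<le> 1 \<and> 0 < ell n \<and> 4*pi \<le> ell n * hh (L + d n) \<and>
                 ell (Suc n) = (2*pi/3)/BB (d n)"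
    and L0: "ell 0 = L"
  shows "n \<le> m \<Longrightarrow> \<exists>a. 0 \<le> a \<and> a + ell n \<le> L \<and> (\<forall>x. a \<le> x \<and> x \<le> a + ell n \<longrightarrow> (\<forall>j<n. cnd S d j x))"
proof (induction n)
  case 0
  thus ?case using L0 by (intro exI[of _ 0]) auto
next
  case (Suc n)
  hence nm: "n < m" by simp
  obtain a where a: "0 \<le> a" "a + ell n \<le> L" "\<forall>x. a \<le> x \<and> x \<le> a + ell n \<longrightarrow> (\<forall>j<n. cnd S d j x)"
    using Suc by auto
  have h: "0 < d n" "L + d n \<le> 1" "0 < ell n" "4*pi \<le> ell n * hh (L + d n)" "ell (Suc n) = (2*pi/3)/BB (d n)"
    using H nm by auto
  obtain a' where a': "a \<le> a'" "a' + (2*pi/3)/BB (d n) \<le> a + ell n"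
     "\<forall>x. a' \<le> x \<and> x \<le> a' + (2*pi/3)/BB (d n) \<longrightarrow>
        (if n \<in> S then 1/2 \<le> sin (hh (x + d n)) else sin (hh (x + d n)) \<le> -1/2)"
    using split_step[of "d n" a "ell n" L "n \<in> S"] h a by blast
  show ?case
  proof (intro exI[of _ a'] conjI allI impI)
    show "0 \<le> a'" using a a' by simp
    show "a' + ell (Suc n) \<le> L" using a a' h by simp
  next
    fix x j assume x: "a' \<le> x \<and> x \<le> a' + ell (Suc n)" and j: "j < Suc n"
    show "cnd S d j x"
    proof (cases "j = n")
      case True thus ?thesis using a'(3) x h unfolding cnd_def by auto
    next
      case False thus ?thesis using a(3) x a' h j by auto
    qed
  qed
qed

lemma growth:
  assumes "0 < p" "p \<le> 1" "0 < q" "q \<le> p/4"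
  shows "6 * BB p \<le> hh q"
proof -
  define u where "u = 1/p"
  have u1: "1 \<le> u" using assms by (simp add: u_def)
  define A where "A = exp u"
  have A2: "2 \<le> A" using exp_ge_add_one_self[of u] u1 unfolding A_def by linarith
  have uA: "u \<le> A" using exp_ge_add_one_self[of u] unfolding A_def by linarith
  have e4: "exp (4*u) = A^4" unfolding A_def by (simp add: exp_of_nat_mult[symmetric])
  have "A^4 \<ge> 8*A"
  proof -
    have "A^3 \<ge> 2^3" using A2 by (intro power_mono) auto
    hence "A * A^3 \<ge> A * 8" using A2 by (intro mult_left_mono) auto
    thus ?thesis by (simp add: power_numeral_reduce mult.commute)
  qed
  hence key: "3 + A + 3*u \<le> exp (4*u)" using e4 A2 uA by linarith
  have "4*u \<le> 1/q" using assms by (simp add: u_def field_simps)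
  hence e5: "exp (4*u) \<le> exp (1/q)" by simp
  have k1: "3 + exp u + 3*u \<le> exp (1/q)" using key e5 unfolding A_def by linarith
  have k2: "3 + exp (1/p) + 3/p \<le> exp (1/q)" using k1 unfolding u_def by simp
  have "6 * BB p \<le> exp 3 * BB p"
  proof -
    have "(6::real) \<le> exp 3"
    proof -
      have "(2::real) \<le> exp 1" using exp_ge_add_one_self[of "1::real"] by simp
      hence "(2::real)^3 \<le> (exp 1)^3" by (intro power_mono) auto
      also have "(exp 1)^3 = exp (3::real)" by (simp add: exp_of_nat_mult[symmetric])
      finally show ?thesis by simp
    qed
    thus ?thesis by (simp add: BB_def)
  qed
  also have "\<dots> = exp (3 + exp (1/p) + 3/p)" by (simp add: BB_def exp_add[symmetric] add.assoc)
  also have "\<dots> \<le> hh q" unfolding hh_def using k2 u_def by simp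
  finally show ?thesis .
qed

lemma exp_sq_lower: "0 \<le> v \<Longrightarrow> (v/2)^2 \<le> exp (v::real)"
proof -
  assume v: "0 \<le> v"
  have "v/2 \<le> exp (v/2)" using exp_ge_add_one_self[of "v/2"] by linarith
  hence "(v/2)^2 \<le> (exp (v/2))^2" using v by (intro power_mono) auto
  also have "(exp (v/2))^2 = exp v" by (simp add: power2_eq_square exp_add[symmetric])
  finally show ?thesis .
qed

lemma shatter:
  "\<exists>d::nat\<Rightarrow>real. (\<forall>j<m. 0 < d j) \<and>
     (\<forall>S. \<exists>x. 0 \<le> x \<and> x \<le> 1 \<and> (\<forall>j<m. x + d j \<le> 1 \<and> cnd S d j x))"
proof -
  define \<delta> :: real where "\<delta> = 1/(256 * 8^m)"
  define d where "d j = \<delta> / 8^j" for j :: nat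
  define L where "L = \<delta> / 8^m"
  define ell where "ell n = (if n = 0 then L else (2*pi/3)/BB (d (n-1)))" for n :: nat
  have \<delta>0: "0 < \<delta>" by (simp add: \<delta>_def)
  have \<delta>1: "\<delta> \<le> 1/256" unfolding \<delta>_def by (simp add: field_simps)
  have dpos: "0 < d j" for j using \<delta>0 by (simp add: d_def)
  have dle: "d j \<le> \<delta>" for j using \<delta>0 by (simp add: d_def divide_le_eq)
  have L0: "0 < L" using \<delta>0 by (simp add: L_def)
  have Lle: "L \<le> d j" if "j \<le> m" for j
  proof -
    have "(8::real)^j \<le> 8^m" using that by (intro power_increasing) auto
    thus ?thesis unfolding L_def d_def using \<delta>0 by (intro divide_left_mono) auto
  qed
  have Ld: "L \<le> \<delta>" using Lle[of 0] by (simp add: d_def)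
  have BBpos: "0 < BB p" for p by (simp add: BB_def)
  have H: "\<forall>n<m. 0 < d n \<and> L + d n \<le> 1 \<and> 0 < ell n \<and> 4*pi \<le> ell n * hh (L + d n) \<and>
                 ell (Suc n) = (2*pi/3)/BB (d n)"
  proof (intro allI impI conjI)
    fix n assume n: "n < m"
    show "0 < d n" by (rule dpos)
    show "L + d n \<le> 1" using Ld dle[of n] \<delta>1 by linarith
    show "0 < ell n" using L0 BBpos by (simp add: ell_def)
    show "ell (Suc n) = (2*pi/3)/BB (d n)" by (simp add: ell_def)
    show "4*pi \<le> ell n * hh (L + d n)"
    proof (cases n)
      case 0
      define v where "v = 1/(2*\<delta>)"
      have v0: "0 \<le> v" using \<delta>0 by (simp add: v_def)
      have "hh (2*\<delta>) \<le> hh (L + d n)" using 0 Ld L0 dpos[of n] by (intro hh_mono) (auto simp: d_def)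
      moreover have "exp v \<le> hh (2*\<delta>)"
      proof -
        have "v \<le> exp v" using exp_ge_add_one_self[of v] by linarith
        thus ?thesis unfolding hh_def v_def by simp
      qed
      moreover have "(v/2)^2 \<le> exp v" using v0 by (rule exp_sq_lower)
      ultimately have hv: "(v/2)^2 \<le> hh (L + d n)" by linarith
      have "L * (v/2)^2 = 16"
        unfolding L_def v_def \<delta>_def by (simp add: power2_eq_square field_simps)
      moreover have "L * (v/2)^2 \<le> L * hh (L + d n)" using hv L0 by (intro mult_left_mono) auto
      moreover have "4*pi \<le> 16" using pi_less_4 by simp
      ultimately show ?thesis using 0 by (simp add: ell_def)
    next
      case (Suc k)
      have "6 * BB (d k) \<le> hh (L + d (Suc k))"
      proof (rule growth)
        show "0 < d k" by (rule dpos)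
        show "d k \<le> 1" using dle[of k] \<delta>1 by linarith
        show "0 < L + d (Suc k)" using L0 dpos[of "Suc k"] by simp
        have "L \<le> d (Suc k)" using Lle[of "Suc k"] n Suc by simp
        moreover have "d (Suc k) = d k / 8" by (simp add: d_def)
        ultimately show "L + d (Suc k) \<le> d k / 4" by simp
      qed
      hence "(2*pi/3)/BB (d k) * (6 * BB (d k)) \<le> (2*pi/3)/BB (d k) * hh (L + d (Suc k))"
        using BBpos[of "d k"] by (intro mult_left_mono) auto
      moreover have "(2*pi/3)/BB (d k) * (6 * BB (d k)) = 4*pi" using BBpos[of "d k"] by (simp add: field_simps)
      ultimately show ?thesis using Suc by (simp add: ell_def)
    qed
  qed
  show ?thesis
  proof (intro exI[of _ d] conjI allI impI)
    fix j show "0 < d j" by (rule dpos)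
  next
    fix S
    obtain a where a: "0 \<le> a" "a + ell m \<le> L" "\<forall>x. a \<le> x \<and> x \<le> a + ell m \<longrightarrow> (\<forall>j<m. cnd S d j x)"
      using nest[where n=m and S=S, OF H] by (auto simp: ell_def)
    have em: "0 < ell m" using L0 BBpos by (simp add: ell_def)
    show "\<exists>x. 0 \<le> x \<and> x \<le> 1 \<and> (\<forall>j<m. x + d j \<le> 1 \<and> cnd S d j x)"
    proof (intro exI[of _ a] conjI allI impI)
      show "0 \<le> a" by fact
      show "a \<le> 1" using a em Ld \<delta>1 by linarith
    next
      fix j assume "j < m"
      show "a + d j \<le> 1" using a em Ld \<delta>1 dle[of j] by linarith
      show "cnd S d j a" using a em \<open>j < m\<close> by auto
    qed
  qed
qed

lemma Kker_meas: "(\<lambda>z. Kker c (x - z)) \<in> borel_measurable borel"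
  unfolding Kker_def by measurable

definition PP :: "nat \<Rightarrow> (nat \<Rightarrow> real) \<Rightarrow> real measure" where
  "PP m d = distr (measure_pmf (pmf_of_set {..<m})) borel (\<lambda>j. - d j)"

lemma PP_in: "0 < m \<Longrightarrow> PP m d \<in> borel_prob_measures"
  unfolding borel_prob_measures_def PP_def
  by (auto intro!: measure_pmf.prob_space_distr)

lemma intP:
  assumes m: "0 < m" and h: "h \<in> borel_measurable borel" and h0: "\<And>z. 0 \<le> h z"
  shows "(\<integral>\<^sup>+ z. ennreal (h z) \<partial>PP m d) = ennreal ((\<Sum>j<m. h (- d j)) / real m)"
proof -
  have "(\<integral>\<^sup>+ z. ennreal (h z) \<partial>PP m d) = (\<integral>\<^sup>+ j. ennreal (h (- d j)) \<partial>measure_pmf (pmf_of_set {..<m}))"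
    unfolding PP_def using h by (subst nn_integral_distr) auto
  also have "\<dots> = (\<Sum>j<m. ennreal (h (- d j))) / of_nat (card {..<m::nat})"
    using m by (subst nn_integral_pmf_of_set) auto
  also have "\<dots> = ennreal (\<Sum>j<m. h (- d j)) / ennreal (real m)"
    using h0 by (simp add: ennreal_of_nat_eq_real_of_nat)
  also have "\<dots> = ennreal ((\<Sum>j<m. h (- d j)) / real m)"
    using m h0 by (intro divide_ennreal) (auto intro: sum_nonneg)
  finally show ?thesis .
qed

lemma close_sum:
  assumes m: "0 < m" and f: "f \<in> borel_measurable borel" and g: "g \<in> borel_measurable borel"
    and cl: "L2_close (PP m d) eps f g"
  shows "(\<Sum>j<m. (f (- d j) - g (- d j))^2) \<le> real m * eps^2"
proof -
  have "ennreal ((\<Sum>j<m. (f (- d j) - g (- d j))^2) / real m) \<le> ennreal (eps^2)"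
    using cl unfolding L2_close_def using intP[OF m, of "\<lambda>z. (f z - g z)^2" d] f g by simp
  hence "(\<Sum>j<m. (f (- d j) - g (- d j))^2) / real m \<le> eps^2" by (simp add: ennreal_le_iff)
  thus ?thesis using m by (simp add: divide_le_eq mult.commute)
qed

lemma ncov_lower:
  fixes c :: real
  assumes m: "0 < m"
    and xf: "\<And>S. 0 \<le> xf S \<and> xf S \<le> 1 \<and> (\<forall>j<m. 0 < xf S + d j \<and> xf S + d j \<le> 1 \<and> cnd S d j (xf S))"
    and eps: "4 * real m * eps^2 < 1"
  shows "ereal (2^m) \<le> N_cov eps ((\<lambda>x. \<lambda>z. Kker c (x - z)) ` {0..1}) (PP m d)"
  unfolding N_cov_def
proof (rule Inf_greatest, clarify)
  fix G assume G: "finite G" "G \<subseteq> borel_measurable borel"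
    and cov: "\<forall>f\<in>(\<lambda>x. \<lambda>z. Kker c (x - z)) ` {0..1}. \<exists>g\<in>G. L2_close (PP m d) eps f g"
  define F where "F S = (\<lambda>z. Kker c (xf S - z))" for S
  have FA: "F S \<in> (\<lambda>x. \<lambda>z. Kker c (x - z)) ` {0..1}" for S using xf[of S] by (auto simp: F_def)
  have "\<forall>S. \<exists>g\<in>G. L2_close (PP m d) eps (F S) g" using cov FA by blast
  then obtain gs where gs: "\<And>S. gs S \<in> G" "\<And>S. L2_close (PP m d) eps (F S) (gs S)" by metis
  have Fval: "F S (- d j) = sin (hh (xf S + d j))" if "j < m" for S j
    using xf[of S] that by (auto simp: F_def Kker_def hh_def)
  have Fm: "F S \<in> borel_measurable borel" for S unfolding F_def by (rule Kker_meas)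
  have inj: "inj_on gs (Pow {..<m})"
  proof (rule inj_onI, rule ccontr)
    fix S T assume S: "S \<in> Pow {..<m}" and T: "T \<in> Pow {..<m}" and eq: "gs S = gs T" and ne: "S \<noteq> T"
    obtain j where j: "j < m" "(j \<in> S) \<noteq> (j \<in> T)" using S T ne by blast
    have cS: "cnd S d j (xf S)" and cT: "cnd T d j (xf T)" using xf j by auto
    have big: "1 \<le> (F S (- d j) - F T (- d j))^2"
    proof -
      have "1 \<le> \<bar>F S (- d j) - F T (- d j)\<bar>"
        using cS cT j unfolding cnd_def Fval[OF j(1)] by (auto split: if_splits)
      hence "1^2 \<le> \<bar>F S (- d j) - F T (- d j)\<bar>^2" by (intro power_mono) auto
      thus ?thesis by simp
    qed
    define g where "g = gs S"
    have gm: "g \<in> borel_measurable borel" using G gs unfolding g_def by auto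
    have s1: "(\<Sum>i<m. (F S (- d i) - g (- d i))^2) \<le> real m * eps^2"
      using close_sum[OF m Fm gm] gs(2)[of S] unfolding g_def by simp
    have s2: "(\<Sum>i<m. (F T (- d i) - g (- d i))^2) \<le> real m * eps^2"
      using close_sum[OF m Fm gm] gs(2)[of T] unfolding g_def eq by simp
    have pt: "(F S (- d i) - F T (- d i))^2 \<le> 2 * (F S (- d i) - g (- d i))^2 + 2 * (F T (- d i) - g (- d i))^2" for i
    proof -
      have "0 \<le> (F S (- d i) + F T (- d i) - 2 * g (- d i))^2" by simp
      thus ?thesis by (simp add: power2_eq_square algebra_simps)
    qed
    have "1 \<le> (\<Sum>i<m. (F S (- d i) - F T (- d i))^2)"
      using big j(1) by (intro order_trans[OF _ member_le_sum]) auto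
    also have "\<dots> \<le> (\<Sum>i<m. 2 * (F S (- d i) - g (- d i))^2 + 2 * (F T (- d i) - g (- d i))^2)"
      by (intro sum_mono pt)
    also have "\<dots> = 2 * (\<Sum>i<m. (F S (- d i) - g (- d i))^2) + 2 * (\<Sum>i<m. (F T (- d i) - g (- d i))^2)"
      by (simp add: sum.distrib sum_distrib_left)
    also have "\<dots> \<le> 4 * real m * eps^2" using s1 s2 by linarith
    finally show False using eps by linarith
  qed
  have "card (Pow {..<m}) \<le> card G"
    using card_inj_on_le[OF inj] gs(1) G(1) by blast
  hence "2^m \<le> card G" by (simp add: card_Pow)
  thus "ereal (2^m) \<le> ereal (real (card G))"
    by (metis ereal_less_eq(3) of_nat_le_iff of_nat_numeral of_nat_power)
qed

lemma exp_pow_lower: "0 \<le> x \<Longrightarrow> 0 < n \<Longrightarrow> (x / real n)^n \<le> exp (x::real)"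
proof -
  assume x: "0 \<le> x" and n: "0 < n"
  have "x / real n \<le> exp (x / real n)" using exp_ge_add_one_self[of "x / real n"] by linarith
  hence "(x / real n)^n \<le> (exp (x / real n))^n" using x n by (intro power_mono) auto
  also have "\<dots> = exp (real n * (x / real n))" by (simp only: exp_of_nat_mult)
  also have "\<dots> = exp x" using n by simp
  finally show ?thesis .
qed

lemma asym:
  fixes C b :: real
  assumes C: "C > 0" and b: "b > 0"
  shows "\<exists>m::nat. 0 < m \<and> C * (3 * sqrt (real m)) powr b < 2^m"
proof -
  define B where "B = nat \<lceil>b\<rceil>"
  define n where "n = Suc B"
  define K where "K = C * 3^B * (3*real n/2)^n"
  define m where "m = nat \<lceil>K\<rceil> + 1"
  have K0: "0 < K" using C by (simp add: K_def n_def)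
  have mK: "K < real m" unfolding m_def using of_nat_ceiling[of K] by linarith
  have m1: "1 \<le> real m" unfolding m_def by simp
  define y where "y = 3 * sqrt (real m)"
  have sm: "1 \<le> sqrt (real m)" using m1 by simp
  have y1: "1 \<le> y" using sm unfolding y_def by linarith
  have bB: "b \<le> real B" unfolding B_def by linarith
  have "y powr b \<le> y powr (real B)" using y1 bB by (intro powr_mono) auto
  also have "\<dots> = y^B" using y1 by (simp add: powr_realpow)
  also have "\<dots> = 3^B * (sqrt (real m))^B" by (simp add: y_def power_mult_distrib)
  also have "\<dots> \<le> 3^B * (real m)^B"
  proof -
    have "sqrt (real m) * 1 \<le> sqrt (real m) * sqrt (real m)" using sm by (intro mult_left_mono) auto
    hence "sqrt (real m) \<le> real m" using m1 by simp
    thus ?thesis by (intro mult_left_mono power_mono) auto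
  qed
  finally have r1: "C * y powr b \<le> C * 3^B * (real m)^B" using C by (simp add: mult.assoc mult_left_mono)
  have n0: "0 < real n" by (simp add: n_def)
  have one: "(2/(3*real n))^n * (3*real n/2)^n = 1"
  proof -
    have "(2/(3*real n)) * (3*real n/2) = 1" using n0 by (simp add: field_simps)
    hence "((2/(3*real n)) * (3*real n/2))^n = 1" by simp
    thus ?thesis by (simp only: power_mult_distrib)
  qed
  have "C * 3^B * (real m)^B = (C * 3^B * (real m)^B) * ((2/(3*real n))^n * (3*real n/2)^n)"
    using one by simp
  also have "\<dots> = (2/(3*real n))^n * K * (real m)^B" unfolding K_def by (simp only: ac_simps)
  finally have "C * 3^B * (real m)^B = (2/(3*real n))^n * K * (real m)^B" .
  also have "\<dots> < (2/(3*real n))^n * real m * (real m)^B"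
    using mK m1 by (intro mult_strict_right_mono mult_strict_left_mono) (auto simp: n_def)
  also have "\<dots> = (2 * real m / 3 / real n)^n"
    by (simp add: n_def power_divide power_mult_distrib field_simps)
  also have "\<dots> \<le> exp (2 * real m / 3)" using m1 by (intro exp_pow_lower) (auto simp: n_def)
  also have "\<dots> \<le> exp (real m * ln 2)" using ln2_ge_two_thirds m1 by (simp add: mult_left_mono)
  also have "\<dots> = 2^m" by (simp add: exp_of_nat_mult)
  finally show ?thesis using r1 m1 unfolding y_def by (intro exI[of _ m]) auto
qed

theorem mainTheorem7:
  fixes c :: real
  defines "FA \<equiv> (\<lambda>x. \<lambda>z. Kker c (x - z)) ` {0..1}"
  shows "\<not> (\<exists>C>0. \<exists>b>0. \<forall>eps::real. 0 < eps \<and> eps < 1 \<longrightarrow>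
            (SUP P\<in>borel_prob_measures. N_cov eps FA P) \<le> ereal (C * eps powr (- b)))"
proof
  assume "\<exists>C>0. \<exists>b>0. \<forall>eps::real. 0 < eps \<and> eps < 1 \<longrightarrow>
            (SUP P\<in>borel_prob_measures. N_cov eps FA P) \<le> ereal (C * eps powr (- b))"
  then obtain C b where C: "C > 0" "b > 0" and bnd: "\<And>eps. 0 < eps \<Longrightarrow> eps < 1 \<Longrightarrow>
            (SUP P\<in>borel_prob_measures. N_cov eps FA P) \<le> ereal (C * eps powr (- b))" by blast
  obtain m :: nat where m: "0 < m" and small: "C * (3 * sqrt (real m)) powr b < 2^m"
    using asym[OF C] by blast
  obtain d where d: "\<forall>j<m. 0 < d j"
    and sh: "\<forall>S. \<exists>x. 0 \<le> x \<and> x \<le> 1 \<and> (\<forall>j<m. x + d j \<le> 1 \<and> cnd S d j x)"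
    using shatter[of m] by blast
  obtain xf where xf: "\<And>S. 0 \<le> xf S \<and> xf S \<le> 1 \<and> (\<forall>j<m. xf S + d j \<le> 1 \<and> cnd S d j (xf S))"
    using sh by metis
  have xf': "0 \<le> xf S \<and> xf S \<le> 1 \<and> (\<forall>j<m. 0 < xf S + d j \<and> xf S + d j \<le> 1 \<and> cnd S d j (xf S))" for S
    using xf[of S] d by (auto intro: add_nonneg_pos)
  define y where "y = 3 * sqrt (real m)"
  have y3: "3 \<le> y" using m unfolding y_def by simp
  define eps where "eps = 1 / y"
  have e0: "0 < eps" "eps < 1" using y3 unfolding eps_def by auto
  have "4 * real m * eps^2 = 4/9" using m unfolding eps_def y_def by (simp add: power2_eq_square field_simps)
  hence e4: "4 * real m * eps^2 < 1" by simp
  have "ereal (2^m) \<le> N_cov eps FA (PP m d)"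
    unfolding FA_def by (rule ncov_lower[OF m xf' e4])
  also have "\<dots> \<le> (SUP P\<in>borel_prob_measures. N_cov eps FA P)"
    using PP_in[OF m] by (rule SUP_upper)
  also have "\<dots> \<le> ereal (C * eps powr (- b))" using bnd e0 by blast
  also have "eps powr (- b) = y powr b"
    using y3 unfolding eps_def by (simp add: powr_minus powr_divide)
  finally have "2^m \<le> C * (3 * sqrt (real m)) powr b" unfolding y_def by simp
  thus False using small by simp
qed

end
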